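(* Let $(J,S)$ be an irreducible and ergodic homogeneous $d$-dimensional multi-time Markov renewal chain, and let $\nu=(\nu_1,\dots,\nu_s)$ be the stationary distribution of the embedded chain $J$. Then for all $j\in E$ and $1\le u,v\le d$: $$\mu^{(u)}_{jj}=\frac{\sum_{i=1}^s\nu_i m^{[u]}_i}{\nu_j},\qquad \mu_{jj}=\frac{\sum_{i=1}^s\nu_i m_i}{\nu_j},$$ $$\mu^{(u,v)}_{jj}=\frac{\sum_{i=1}^s\nu_i m^{[u,v]}_i}{\nu_j}+\frac{\sum_{i=1}^s\sum_{r\ne j}\nu_i p_{ir}\big[m^{[u]}_{ir}\mu^{(v)}_{rj}+m^{[v]}_{ir}\mu^{(u)}_{rj}\big]}{\nu_j}.$$
   Context: $E=\{1,\dots,s\}$; $\mathbb{N}^d$ has the componentwise partial order, $k<l$ meaning $k\le l$, $k\ne l$. A homogeneous $d$-dimensional multi-time Markov renewal chain is a process $(J_n,S_n)_{n\in\mathbb{N}}$, $J_n\in E$, $S_n=(S^{[1]}_n,\dots,S^{[d]}_n)\in\mathbb{N}^d$, $S_0=0_d$, $S_n<S_{n+1}$, with a.s. $\mathbb{P}(J_{n+1}=j,S_{n+1}-S_n=k\mid J_{0:n},S_{0:n})=q_{J_nj}(k)$, $q_{ij}(k)=\mathbb{P}(J_{n+1}=j,S_{n+1}-S_n=k\mid J_n=i)$ independent of $n$. $X_{n+1}=S_{n+1}-S_n$ with coordinates $X^{[u]}_{n+1}$. $p_{ij}=\sum_kq_{ij}(k)$ are the transition probabilities of $J$. $\mathbb{E}_i$: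 expectation given $J_0=i$. Moments: $m^{[u]}_i=\mathbb{E}[X^{[u]}_{n+1}\mid J_n=i]$, $m_i=(m^{[1]}_i,\dots,m^{[d]}_i)$, $m^{[u,v]}_i=\mathbb{E}[X^{[u]}_{n+1}X^{[v]}_{n+1}\mid J_n=i]$, $m^{[u]}_{ir}=\mathbb{E}[X^{[u]}_{n+1}\mid J_n=i,J_{n+1}=r]$. With $m_j=\min\{l\ge1:J_l=j\}$ and $T_j=S_{m_j}$ (coordinates $T^{[u]}_j$): $\mu^{(u)}_{ij}=\mathbb{E}_i[T^{[u]}_j]$, $\mu_{ij}=(\mu^{(1)}_{ij},\dots,\mu^{(d)}_{ij})$, $\mu^{(u,v)}_{ij}=\mathbb{E}_i[T^{[u]}_jT^{[v]}_j]$. For each $u$, $(J,S^{[u]})$ is the marginal one-dimensional-time Markov renewal chain with kernel $q^{[u]}_{ij}(k)=\sum_{k_{1:d}:k_u=k}q_{ij}(k_{1:d})$. The chain $(J,S)$ is irreducible if $J$ is irreducible; it is ergodic if every marginal chain $(J,S^{[u]})$ is positive recurrent (each state $j$ has a.s. finite return time $T^{[u]}_j$ with finite mean) and aperiodic (the distribution of each return time $T^{[u]}_j$ has period $1$). *)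

theory Defs
  imports "HOL-Probability.Probability"
begin

text \<open>States are E = {1..s} (natural numbers); multi-times are functions
  'd \<Rightarrow> nat for a finite index type 'd (so d = CARD('d)), ordered
  componentwise (the library's pointwise order on functions).
  The chain is given on a common sample space with one law M i for each
  initial state i (so E_i is integration w.r.t. M i).\<close>

definition mtmrc ::
  "nat \<Rightarrow> (nat \<Rightarrow> nat \<Rightarrow> ('d::finite \<Rightarrow> nat) \<Rightarrow> real) \<Rightarrow> (nat \<Rightarrow> 'w measure)
   \<Rightarrow> (nat \<Rightarrow> 'w \<Rightarrow> nat) \<Rightarrow> (nat \<Rightarrow> 'w \<Rightarrow> ('d \<Rightarrow> nat)) \<Rightarrow> bool" where
  "mtmrc s q M J S \<longleftrightarrow>
     (\<forall>n \<omega>. J n \<omega> \<in> {1..s}) \<and> (\<forall>\<omega> u. S 0 \<omega> u = 0) \<and> (\<forall>n \<omega>. S n \<omega> < S (Suc n) \<omega>) \<and>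
     (\<forall>i\<in>{1..s}. prob_space (M i) \<and>
        (\<forall>n. J n \<in> measurable (M i) (count_space UNIV) \<and> S n \<in> measurable (M i) (count_space UNIV)) \<and>
        (AE \<omega> in M i. J 0 \<omega> = i) \<and>
        (\<forall>n js ss j k.
           measure (M i) {\<omega> \<in> space (M i). (\<forall>l\<le>n. J l \<omega> = js l \<and> S l \<omega> = ss l) \<and>
                J (Suc n) \<omega> = j \<and> (\<forall>u. S (Suc n) \<omega> u = S n \<omega> u + k u)}
           = q (js n) j k * measure (M i) {\<omega> \<in> space (M i). \<forall>l\<le>n. J l \<omega> = js l \<and> S l \<omega> = ss l}))"

definition ptrans :: "(nat \<Rightarrow> nat \<Rightarrow> ('d \<Rightarrow> nat) \<Rightarrow> real) \<Rightarrow> nat \<Rightarrow> nat \<Rightarrow> real" where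
  "ptrans q i j = (\<Sum>\<^sub>\<infinity>k. q i j k)"

definition irreducible_mtmrc :: "nat \<Rightarrow> (nat \<Rightarrow> nat \<Rightarrow> ('d \<Rightarrow> nat) \<Rightarrow> real) \<Rightarrow> bool" where
  "irreducible_mtmrc s q \<longleftrightarrow>
     (\<forall>i\<in>{1..s}. \<forall>j\<in>{1..s}. (i, j) \<in> {(a, b). a \<in> {1..s} \<and> b \<in> {1..s} \<and> ptrans q a b > 0}\<^sup>*)"

definition stationary_dist :: "nat \<Rightarrow> (nat \<Rightarrow> nat \<Rightarrow> ('d \<Rightarrow> nat) \<Rightarrow> real) \<Rightarrow> (nat \<Rightarrow> real) \<Rightarrow> bool" where
  "stationary_dist s q \<nu> \<longleftrightarrow>
     (\<forall>j\<in>{1..s}. \<nu> j \<ge> 0) \<and> (\<Sum>j=1..s. \<nu> j) = 1 \<and>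
     (\<forall>j\<in>{1..s}. \<nu> j = (\<Sum>i=1..s. \<nu> i * ptrans q i j))"

definition firstret :: "(nat \<Rightarrow> 'w \<Rightarrow> nat) \<Rightarrow> nat \<Rightarrow> 'w \<Rightarrow> nat" where
  "firstret J j \<omega> = (LEAST l. l \<ge> 1 \<and> J l \<omega> = j)"

definition Tret :: "(nat \<Rightarrow> 'w \<Rightarrow> nat) \<Rightarrow> (nat \<Rightarrow> 'w \<Rightarrow> ('d \<Rightarrow> nat)) \<Rightarrow> nat \<Rightarrow> 'w \<Rightarrow> ('d \<Rightarrow> nat)" where
  "Tret J S j \<omega> = S (firstret J j \<omega>) \<omega>"

text \<open>Ergodic: every marginal chain (J, S^[u]) is positive recurrent and aperiodic.\<close>
definition ergodic_mtmrc ::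
  "nat \<Rightarrow> (nat \<Rightarrow> 'w measure) \<Rightarrow> (nat \<Rightarrow> 'w \<Rightarrow> nat) \<Rightarrow> (nat \<Rightarrow> 'w \<Rightarrow> ('d \<Rightarrow> nat)) \<Rightarrow> bool" where
  "ergodic_mtmrc s M J S \<longleftrightarrow>
     (\<forall>u. \<forall>j\<in>{1..s}.
        (AE \<omega> in M j. \<exists>l\<ge>1. J l \<omega> = j) \<and>
        (\<integral>\<^sup>+\<omega>. of_nat (Tret J S j \<omega> u) \<partial>M j) < \<infinity> \<and>
        Gcd {k. measure (M j) {\<omega> \<in> space (M j). (\<exists>l\<ge>1. J l \<omega> = j) \<and> Tret J S j \<omega> u = k} > 0} = 1)"

text \<open>Moments (nonnegative, possibly infinite, hence in ennreal).\<close>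
definition m1 :: "nat \<Rightarrow> (nat \<Rightarrow> nat \<Rightarrow> ('d \<Rightarrow> nat) \<Rightarrow> real) \<Rightarrow> 'd \<Rightarrow> nat \<Rightarrow> ennreal" where
  "m1 s q u i = (\<Sum>j=1..s. \<integral>\<^sup>+k. ennreal (q i j k * real (k u)) \<partial>count_space UNIV)"

definition m2 :: "nat \<Rightarrow> (nat \<Rightarrow> nat \<Rightarrow> ('d \<Rightarrow> nat) \<Rightarrow> real) \<Rightarrow> 'd \<Rightarrow> 'd \<Rightarrow> nat \<Rightarrow> ennreal" where
  "m2 s q u v i = (\<Sum>j=1..s. \<integral>\<^sup>+k. ennreal (q i j k * real (k u) * real (k v)) \<partial>count_space UNIV)"

text \<open>m^[u]_ir = E[X^[u]_{n+1} | J_n = i, J_{n+1} = r] = (sum_k k_u q_ir(k)) / p_ir.\<close>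
definition m1r :: "(nat \<Rightarrow> nat \<Rightarrow> ('d \<Rightarrow> nat) \<Rightarrow> real) \<Rightarrow> 'd \<Rightarrow> nat \<Rightarrow> nat \<Rightarrow> ennreal" where
  "m1r q u i r = (\<integral>\<^sup>+k. ennreal (q i r k * real (k u)) \<partial>count_space UNIV) / ennreal (ptrans q i r)"

definition mu1 :: "(nat \<Rightarrow> 'w measure) \<Rightarrow> (nat \<Rightarrow> 'w \<Rightarrow> nat) \<Rightarrow> (nat \<Rightarrow> 'w \<Rightarrow> ('d \<Rightarrow> nat)) \<Rightarrow> 'd \<Rightarrow> nat \<Rightarrow> nat \<Rightarrow> ennreal" where
  "mu1 M J S u i j = (\<integral>\<^sup>+\<omega>. of_nat (Tret J S j \<omega> u) \<partial>M i)"

definition mu2 :: "(nat \<Rightarrow> 'w measure) \<Rightarrow> (nat \<Rightarrow> 'w \<Rightarrow> nat) \<Rightarrow> (nat \<Rightarrow> 'w \<Rightarrow> ('d \<Rightarrow> nat)) \<Rightarrow> 'd \<Rightarrow> 'd \<Rightarrow> nat \<Rightarrow> nat \<Rightarrow> ennreal" where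
  "mu2 M J S u v i j = (\<integral>\<^sup>+\<omega>. of_nat (Tret J S j \<omega> u) * of_nat (Tret J S j \<omega> v) \<partial>M i)"

end

theory Submission
  imports Defs
begin

lemma sum_L_Suc:
  fixes f :: "'a list \<Rightarrow> ennreal"
  shows "(\<integral>\<^sup>+xs. f xs \<partial>count_space {xs. length xs = Suc n})
       = (\<integral>\<^sup>+x. \<integral>\<^sup>+ys. f (x#ys) \<partial>count_space {ys. length ys = n} \<partial>count_space UNIV)"
proof -
  have "(\<integral>\<^sup>+x. \<integral>\<^sup>+ys. f (x#ys) \<partial>count_space {ys. length ys = n} \<partial>count_space UNIV)
      = (\<integral>\<^sup>+x. \<integral>\<^sup>+ys. (\<lambda>p. f (fst p # snd p) * indicator (UNIV \<times> {ys. length ys = n}) p) (x, ys) \<partial>count_space UNIV \<partial>count_space UNIV)"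
    by (subst nn_integral_count_space_indicator) (auto intro!: nn_integral_cong split: split_indicator)
  also have "\<dots> = (\<integral>\<^sup>+p. f (fst p # snd p) * indicator (UNIV \<times> {ys. length ys = n}) p \<partial>count_space UNIV)"
    by (rule nn_integral_fst_count_space)
  also have "\<dots> = (\<integral>\<^sup>+p. f ((\<lambda>p. fst p # snd p) p) \<partial>count_space (UNIV \<times> {ys. length ys = n}))"
    by (subst nn_integral_count_space_indicator) auto
  also have "\<dots> = (\<integral>\<^sup>+xs. f xs \<partial>count_space {xs. length xs = Suc n})"
  proof (rule nn_integral_bij_count_space)
    show "bij_betw (\<lambda>p. fst p # snd p) (UNIV \<times> {ys. length ys = n}) {xs. length xs = Suc n}"
      unfolding bij_betw_def inj_on_def
      by (auto simp: image_iff length_Suc_conv)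
  qed
  finally show ?thesis by simp
qed

lemma sum_pair:
  fixes f :: "'a \<times> 'b \<Rightarrow> ennreal"
  shows "(\<integral>\<^sup>+x. f x \<partial>count_space UNIV) = (\<integral>\<^sup>+a. \<integral>\<^sup>+b. f (a, b) \<partial>count_space UNIV \<partial>count_space UNIV)"
  by (rule nn_integral_fst_count_space[symmetric])

lemma meas_cnt2:
  fixes f :: "'a \<Rightarrow> 'b::countable" and g :: "'a \<Rightarrow> 'c::countable"
  assumes "f \<in> measurable M (count_space UNIV)" "g \<in> measurable M (count_space UNIV)"
  shows "(\<lambda>x. h (f x) (g x)) \<in> measurable M (count_space UNIV)"
proof -
  have "(\<lambda>x. (\<lambda>b x. h (f x) b) (g x) x) \<in> measurable M (count_space UNIV)"
  proof (rule measurable_compose_countable[OF _ assms(2)])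
    fix b
    show "(\<lambda>x. h (f x) b) \<in> measurable M (count_space UNIV)"
      using measurable_compose[OF assms(1), of "\<lambda>a. h a b" "count_space UNIV"] by simp
  qed
  then show ?thesis by simp
qed


locale mrc =
  fixes s :: nat and q :: "nat \<Rightarrow> nat \<Rightarrow> ('d::finite \<Rightarrow> nat) \<Rightarrow> real"
    and M :: "nat \<Rightarrow> 'w measure" and J :: "nat \<Rightarrow> 'w \<Rightarrow> nat" and S :: "nat \<Rightarrow> 'w \<Rightarrow> ('d \<Rightarrow> nat)"
  assumes chain: "mtmrc s q M J S"
begin

lemma Jrange: "J n \<omega> \<in> {1..s}" using chain unfolding mtmrc_def by blast
lemma S0: "S 0 \<omega> u = 0" using chain unfolding mtmrc_def by blast
lemma Smono: "S n \<omega> < S (Suc n) \<omega>" using chain unfolding mtmrc_def by blast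
lemma Sle: "S n \<omega> u \<le> S (Suc n) \<omega> u" using Smono[of n \<omega>] by (auto simp: less_fun_def le_fun_def)
lemma prob: "i \<in> {1..s} \<Longrightarrow> prob_space (M i)" using chain unfolding mtmrc_def by blast
lemma measJ: "i \<in> {1..s} \<Longrightarrow> J n \<in> measurable (M i) (count_space UNIV)" using chain unfolding mtmrc_def by blast
lemma measS: "i \<in> {1..s} \<Longrightarrow> S n \<in> measurable (M i) (count_space UNIV)" using chain unfolding mtmrc_def by blast
lemma AEJ0: "i \<in> {1..s} \<Longrightarrow> AE \<omega> in M i. J 0 \<omega> = i" using chain unfolding mtmrc_def by blast
lemma cond: "i \<in> {1..s} \<Longrightarrow>
  measure (M i) {\<omega> \<in> space (M i). (\<forall>l\<le>n. J l \<omega> = js l \<and> S l \<omega> = ss l) \<and>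
                J (Suc n) \<omega> = j \<and> (\<forall>u. S (Suc n) \<omega> u = S n \<omega> u + k u)}
           = q (js n) j k * measure (M i) {\<omega> \<in> space (M i). \<forall>l\<le>n. J l \<omega> = js l \<and> S l \<omega> = ss l}"
  using chain unfolding mtmrc_def by blast

definition inc :: "nat \<Rightarrow> 'w \<Rightarrow> ('d \<Rightarrow> nat)" where
  "inc n \<omega> = (\<lambda>u. S (Suc n) \<omega> u - S n \<omega> u)"

definition hist :: "nat \<Rightarrow> 'w \<Rightarrow> (nat \<times> ('d \<Rightarrow> nat)) list" where
  "hist n \<omega> = map (\<lambda>l. (J (Suc l) \<omega>, inc l \<omega>)) [0..<n]"

lemma S_sum: "S l \<omega> u = (\<Sum>m<l. inc m \<omega> u)"
proof (induction l)
  case 0 then show ?case by (simp add: S0)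
next
  case (Suc l) then show ?case using Sle[of l \<omega> u] by (simp add: inc_def)
qed

lemma hist_Suc: "hist (Suc n) \<omega> = hist n \<omega> @ [(J (Suc n) \<omega>, inc n \<omega>)]"
  by (simp add: hist_def)

lemma length_hist[simp]: "length (hist n \<omega>) = n" by (simp add: hist_def)

lemma inc_eq_iff: "inc n \<omega> = k \<longleftrightarrow> (\<forall>u. S (Suc n) \<omega> u = S n \<omega> u + k u)"
  using Sle[of n \<omega>] unfolding inc_def fun_eq_iff by (metis add_diff_cancel_left' le_add_diff_inverse)

lemma hist_eq_iff:
  assumes "J 0 \<omega> = J 0 \<omega>'"
  shows "hist n \<omega> = hist n \<omega>' \<longleftrightarrow> (\<forall>l\<le>n. J l \<omega> = J l \<omega>' \<and> S l \<omega> = S l \<omega>')"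
proof
  assume h: "hist n \<omega> = hist n \<omega>'"
  have a: "J (Suc l) \<omega> = J (Suc l) \<omega>' \<and> inc l \<omega> = inc l \<omega>'" if "l < n" for l
  proof -
    have "hist n \<omega> ! l = hist n \<omega>' ! l" using h by simp
    then show ?thesis using that by (simp add: hist_def)
  qed
  show "\<forall>l\<le>n. J l \<omega> = J l \<omega>' \<and> S l \<omega> = S l \<omega>'"
  proof (intro allI impI conjI)
    fix l assume "l \<le> n"
    then show "J l \<omega> = J l \<omega>'" using a assms by (cases l) auto
    show "S l \<omega> = S l \<omega>'"
      using \<open>l \<le> n\<close> a unfolding fun_eq_iff by (subst (1 2) S_sum) (auto intro!: sum.cong)
  qed
next
  assume h: "\<forall>l\<le>n. J l \<omega> = J l \<omega>' \<and> S l \<omega> = S l \<omega>'"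
  show "hist n \<omega> = hist n \<omega>'"
    unfolding hist_def inc_def using h by (auto intro!: map_cong)
qed

lemma meas_inc: "i \<in> {1..s} \<Longrightarrow> inc n \<in> measurable (M i) (count_space UNIV)"
  unfolding inc_def by (rule meas_cnt2[OF measS measS])

lemma meas_hist: "i \<in> {1..s} \<Longrightarrow> hist n \<in> measurable (M i) (count_space UNIV)"
proof (induction n)
  case 0 then show ?case by (simp add: hist_def)
next
  case (Suc n)
  have "(\<lambda>\<omega>. hist n \<omega> @ [(J (Suc n) \<omega>, inc n \<omega>)]) \<in> measurable (M i) (count_space UNIV)"
    by (rule meas_cnt2[OF Suc(1)[OF Suc(2)] meas_cnt2[OF measJ[OF Suc(2)] meas_inc[OF Suc(2)]]])
  then show ?case by (simp add: hist_Suc)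
qed

lemma q_facts:
  assumes i: "i \<in> {1..s}"
  shows "q i r k \<ge> 0" and "r \<notin> {1..s} \<Longrightarrow> q i r k = 0"
proof -
  interpret prob_space "M i" using prob[OF i] .
  have mJ[measurable]: "J n \<in> measurable (M i) (count_space UNIV)" for n using measJ[OF i] .
  have mS[measurable]: "S n \<in> measurable (M i) (count_space UNIV)" for n using measS[OF i] .
  have "{\<omega> \<in> space (M i). \<forall>l\<le>0. J l \<omega> = i \<and> S l \<omega> = (\<lambda>_. 0)} = {\<omega> \<in> space (M i). J 0 \<omega> = i}"
    by (auto simp: S0 fun_eq_iff)
  moreover have "prob {\<omega> \<in> space (M i). J 0 \<omega> = i} = 1"
    using AEJ0[OF i] by (intro prob_Collect_eq_1[THEN iffD2]) auto
  ultimately have eq: "measure (M i) {\<omega> \<in> space (M i). (\<forall>l\<le>0. J l \<omega> = i \<and> S l \<omega> = (\<lambda>_. 0)) \<and>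
                J (Suc 0) \<omega> = r \<and> (\<forall>u. S (Suc 0) \<omega> u = S 0 \<omega> u + k u)} = q i r k"
    using cond[OF i, of 0 "\<lambda>_. i" "\<lambda>_ _. 0" r k] by simp
  show "q i r k \<ge> 0" using eq[symmetric] by simp
  assume "r \<notin> {1..s}"
  then have "{\<omega> \<in> space (M i). (\<forall>l\<le>0. J l \<omega> = i \<and> S l \<omega> = (\<lambda>_. 0)) \<and>
                J (Suc 0) \<omega> = r \<and> (\<forall>u. S (Suc 0) \<omega> u = S 0 \<omega> u + k u)} = {}" (is "?A = {}")
    using Jrange by blast
  have "measure (M i) ?A = q i r k" by (rule eq)
  then show "q i r k = 0" unfolding \<open>?A = {}\<close> by simp
qed

end

context mrc begin

fun ppe :: "nat \<Rightarrow> (nat \<times> ('d \<Rightarrow> nat)) list \<Rightarrow> ennreal" where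
  "ppe i [] = 1"
| "ppe i ((r,k)#ys) = ennreal (q i r k) * ppe r ys"

definition lastst :: "nat \<Rightarrow> (nat \<times> ('d \<Rightarrow> nat)) list \<Rightarrow> nat" where
  "lastst i xs = (if xs = [] then i else fst (last xs))"

lemma ppe_snoc: "ppe i (xs @ [(r,k)]) = ppe i xs * ennreal (q (lastst i xs) r k)"
  by (induction xs arbitrary: i) (auto simp: lastst_def mult.assoc)

definition Hset :: "nat \<Rightarrow> nat \<Rightarrow> (nat \<times> ('d \<Rightarrow> nat)) list \<Rightarrow> 'w set" where
  "Hset i n xs = {\<omega> \<in> space (M i). J 0 \<omega> = i \<and> hist n \<omega> = xs}"

lemma Hset_sets: "i \<in> {1..s} \<Longrightarrow> Hset i n xs \<in> sets (M i)"
proof -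
  assume i: "i \<in> {1..s}"
  have [measurable]: "J 0 \<in> measurable (M i) (count_space UNIV)" using measJ[OF i] .
  have [measurable]: "hist n \<in> measurable (M i) (count_space UNIV)" using meas_hist[OF i] .
  show ?thesis unfolding Hset_def by measurable
qed

lemma lemmaA:
  assumes i: "i \<in> {1..s}"
  shows "length xs = n \<Longrightarrow> emeasure (M i) (Hset i n xs) = ppe i xs"
proof (induction n arbitrary: xs)
  interpret prob_space "M i" using prob[OF i] .
  have [measurable]: "J n \<in> measurable (M i) (count_space UNIV)" for n using measJ[OF i] .
  case 0
  then have "xs = []" by simp
  have "Hset i 0 [] = {\<omega> \<in> space (M i). J 0 \<omega> = i}" by (simp add: Hset_def hist_def)
  moreover have "prob {\<omega> \<in> space (M i). J 0 \<omega> = i} = 1"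
    using AEJ0[OF i] by (intro prob_Collect_eq_1[THEN iffD2]) auto
  ultimately show ?case using \<open>xs = []\<close> by (simp add: emeasure_eq_measure)
next
  interpret prob_space "M i" using prob[OF i] .
  case (Suc n xs')
  then obtain xs r k where xs': "xs' = xs @ [(r,k)]" and len: "length xs = n"
    by (metis length_Suc_conv_rev prod.collapse)
  have HS: "Hset i (Suc n) xs' = {\<omega> \<in> Hset i n xs. J (Suc n) \<omega> = r \<and> inc n \<omega> = k}"
    unfolding Hset_def xs' by (auto simp: hist_Suc)
  show ?case
  proof (cases "Hset i n xs = {}")
    case True
    then have "ppe i xs = 0" using Suc.IH[OF len] by simp
    then show ?thesis using True HS xs' by (simp add: ppe_snoc)
  next
    case False
    then obtain \<omega>0 where w0: "\<omega>0 \<in> Hset i n xs" by blast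
    then have w0i: "J 0 \<omega>0 = i" and w0h: "hist n \<omega>0 = xs" and w0s: "\<omega>0 \<in> space (M i)"
      by (auto simp: Hset_def)
    have setn: "Hset i n xs = {\<omega> \<in> space (M i). \<forall>l\<le>n. J l \<omega> = J l \<omega>0 \<and> S l \<omega> = S l \<omega>0}"
    proof (intro set_eqI iffI)
      fix \<omega> assume "\<omega> \<in> Hset i n xs"
      then show "\<omega> \<in> {\<omega> \<in> space (M i). \<forall>l\<le>n. J l \<omega> = J l \<omega>0 \<and> S l \<omega> = S l \<omega>0}"
        using hist_eq_iff[of \<omega> \<omega>0 n] w0i w0h by (auto simp: Hset_def)
    next
      fix \<omega> assume a: "\<omega> \<in> {\<omega> \<in> space (M i). \<forall>l\<le>n. J l \<omega> = J l \<omega>0 \<and> S l \<omega> = S l \<omega>0}"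
      then have "J 0 \<omega> = i" using w0i by auto
      then show "\<omega> \<in> Hset i n xs"
        using a hist_eq_iff[of \<omega> \<omega>0 n] w0i w0h by (auto simp: Hset_def)
    qed
    have setsn: "Hset i (Suc n) xs' = {\<omega> \<in> space (M i). (\<forall>l\<le>n. J l \<omega> = J l \<omega>0 \<and> S l \<omega> = S l \<omega>0) \<and>
                J (Suc n) \<omega> = r \<and> (\<forall>u. S (Suc n) \<omega> u = S n \<omega> u + k u)}"
      unfolding HS setn by (auto simp: inc_eq_iff)
    have meq: "measure (M i) (Hset i (Suc n) xs') = q (J n \<omega>0) r k * measure (M i) (Hset i n xs)"
      unfolding setsn setn by (rule cond[OF i])
    have qnn: "q (J n \<omega>0) r k \<ge> 0" using q_facts(1)[OF Jrange] .
    have last: "lastst i xs = J n \<omega>0"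
    proof (cases n)
      case 0 then show ?thesis using len w0i by (simp add: lastst_def)
    next
      case (Suc m) then show ?thesis using w0h len by (auto simp: lastst_def hist_Suc)
    qed
    have "emeasure (M i) (Hset i (Suc n) xs') = ennreal (q (J n \<omega>0) r k) * emeasure (M i) (Hset i n xs)"
      using meq qnn by (simp add: emeasure_eq_measure ennreal_mult)
    then show ?thesis using Suc.IH[OF len] xs' last by (simp add: ppe_snoc mult.commute)
  qed
qed

lemma lemmaB:
  fixes F :: "(nat \<times> ('d \<Rightarrow> nat)) list \<Rightarrow> ennreal"
  assumes i: "i \<in> {1..s}"
  shows "(\<integral>\<^sup>+\<omega>. F (hist n \<omega>) \<partial>M i) = (\<integral>\<^sup>+xs. F xs * ppe i xs \<partial>count_space {xs. length xs = n})"
proof -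
  interpret prob_space "M i" using prob[OF i] .
  have [measurable]: "J n \<in> measurable (M i) (count_space UNIV)" for n using measJ[OF i] .
  have [measurable]: "hist n \<in> measurable (M i) (count_space UNIV)" for n using meas_hist[OF i] .
  have "(\<integral>\<^sup>+\<omega>. F (hist n \<omega>) \<partial>M i) = (\<integral>\<^sup>+\<omega>. F (hist n \<omega>) * indicator {\<omega>. J 0 \<omega> = i} \<omega> \<partial>M i)"
    using AEJ0[OF i] by (intro nn_integral_cong_AE) (auto split: split_indicator)
  also have "\<dots> = (\<integral>\<^sup>+\<omega>. \<integral>\<^sup>+xs. F xs * indicator (Hset i n xs) \<omega> \<partial>count_space {xs. length xs = n} \<partial>M i)"
  proof (intro nn_integral_cong)
    fix \<omega> assume w: "\<omega> \<in> space (M i)"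
    show "F (hist n \<omega>) * indicator {\<omega>. J 0 \<omega> = i} \<omega> =
      (\<integral>\<^sup>+xs. F xs * indicator (Hset i n xs) \<omega> \<partial>count_space {xs. length xs = n})"
    proof (cases "J 0 \<omega> = i")
      case True
      then have "(\<integral>\<^sup>+xs. F xs * indicator (Hset i n xs) \<omega> \<partial>count_space {xs. length xs = n})
          = (\<Sum>xs\<in>{hist n \<omega>}. F xs * indicator (Hset i n xs) \<omega>)"
        using w by (intro nn_integral_count_space') (auto simp: Hset_def)
      then show ?thesis using True w by (simp add: Hset_def)
    next
      case False
      then show ?thesis by (simp add: Hset_def)
    qed
  qed
  also have "\<dots> = (\<integral>\<^sup>+xs. \<integral>\<^sup>+\<omega>. F xs * indicator (Hset i n xs) \<omega> \<partial>M i \<partial>count_space {xs. length xs = n})"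
    using Hset_sets[OF i] by (intro nn_integral_count_space_nn_integral) auto
  also have "\<dots> = (\<integral>\<^sup>+xs. F xs * ppe i xs \<partial>count_space {xs. length xs = n})"
    by (intro nn_integral_cong) (simp add: nn_integral_cmult_indicator Hset_sets[OF i] lemmaA[OF i])
  finally show ?thesis .
qed

end

context mrc begin

definition retf :: "nat \<Rightarrow> (nat \<times> ('d \<Rightarrow> nat)) list \<Rightarrow> bool" where
  "retf j xs \<longleftrightarrow> xs \<noteq> [] \<and> fst (last xs) = j \<and> (\<forall>x\<in>set (butlast xs). fst x \<noteq> j)"

definition sumk :: "(nat \<times> ('d \<Rightarrow> nat)) list \<Rightarrow> ('d \<Rightarrow> nat)" where
  "sumk xs = (\<lambda>u. sum_list (map (\<lambda>x. snd x u) xs))"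

definition G :: "nat \<Rightarrow> (('d \<Rightarrow> nat) \<Rightarrow> ennreal) \<Rightarrow> (nat \<times> ('d \<Rightarrow> nat)) list \<Rightarrow> ennreal" where
  "G j g xs = (if retf j xs then g (sumk xs) else 0)"

definition Phi :: "nat \<Rightarrow> nat \<Rightarrow> nat \<Rightarrow> (('d \<Rightarrow> nat) \<Rightarrow> ennreal) \<Rightarrow> ennreal" where
  "Phi j i n g = (\<integral>\<^sup>+xs. G j g xs * ppe i xs \<partial>count_space {xs. length xs = n})"

definition Q :: "nat \<Rightarrow> nat \<Rightarrow> (('d \<Rightarrow> nat) \<Rightarrow> ennreal) \<Rightarrow> ennreal" where
  "Q i r g = (\<integral>\<^sup>+k. ennreal (q i r k) * g k \<partial>count_space UNIV)"

lemma L0: "{xs. length xs = 0} = {[]}" by auto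

lemma Phi0[simp]: "Phi j i 0 g = 0"
  unfolding Phi_def L0 by (simp add: nn_integral_count_space_finite G_def retf_def)

lemma G_cons: "G j g ((r,k)#ys) = (if ys = [] then (if r = j then g k else 0)
   else (if r = j then 0 else G j (\<lambda>t. g (\<lambda>u. k u + t u)) ys))"
  by (auto simp: G_def retf_def sumk_def)

lemma Q_outside: "i \<in> {1..s} \<Longrightarrow> r \<notin> {1..s} \<Longrightarrow> Q i r g = 0"
  unfolding Q_def using q_facts(2) by simp

lemma Phi_rec:
  assumes i: "i \<in> {1..s}"
  shows "Phi j i (Suc n) g = (if n = 0 then Q i j g else 0) +
     (\<Sum>r\<in>{1..s}-{j}. Q i r (\<lambda>k. Phi j r n (\<lambda>t. g (\<lambda>u. k u + t u))))"
proof -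
  have "Phi j i (Suc n) g = (\<integral>\<^sup>+x. \<integral>\<^sup>+ys. G j g (x#ys) * ppe i (x#ys) \<partial>count_space {ys. length ys = n} \<partial>count_space UNIV)"
    unfolding Phi_def by (rule sum_L_Suc)
  also have "\<dots> = (\<integral>\<^sup>+r. \<integral>\<^sup>+k. \<integral>\<^sup>+ys. G j g ((r,k)#ys) * ppe i ((r,k)#ys) \<partial>count_space {ys. length ys = n} \<partial>count_space UNIV \<partial>count_space UNIV)"
    by (rule sum_pair)
  finally have e: "Phi j i (Suc n) g = \<dots>" .
  show ?thesis
  proof (cases "n = 0")
    case True
    have "Phi j i (Suc n) g = (\<integral>\<^sup>+r. (if r = j then Q i j g else 0) \<partial>count_space UNIV)"
      unfolding e[unfolded True L0] True
      by (intro nn_integral_cong) (auto simp: nn_integral_count_space_finite G_cons Q_def mult.commute)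
    also have "\<dots> = (\<Sum>r\<in>{j}. (if r = j then Q i j g else 0))"
      by (intro nn_integral_count_space') auto
    finally show ?thesis using True by (simp add: Q_def)
  next
    case False
    have "Phi j i (Suc n) g = (\<integral>\<^sup>+r. (if r = j then 0 else Q i r (\<lambda>k. Phi j r n (\<lambda>t. g (\<lambda>u. k u + t u)))) \<partial>count_space UNIV)"
      unfolding e
    proof (intro nn_integral_cong)
      fix r
      show "(\<integral>\<^sup>+k. \<integral>\<^sup>+ys. G j g ((r,k)#ys) * ppe i ((r,k)#ys) \<partial>count_space {ys. length ys = n} \<partial>count_space UNIV)
        = (if r = j then 0 else Q i r (\<lambda>k. Phi j r n (\<lambda>t. g (\<lambda>u. k u + t u))))"
      proof (cases "r = j")
        case True
        have "(\<integral>\<^sup>+ys. G j g ((r,k)#ys) * ppe i ((r,k)#ys) \<partial>count_space {ys. length ys = n}) = 0" for k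
          using False True by (subst nn_integral_cong[where v="\<lambda>_. 0"]) (auto simp: G_cons)
        then show ?thesis using True by simp
      next
        case rj: False
        have "(\<integral>\<^sup>+ys. G j g ((r,k)#ys) * ppe i ((r,k)#ys) \<partial>count_space {ys. length ys = n})
             = ennreal (q i r k) * Phi j r n (\<lambda>t. g (\<lambda>u. k u + t u))" for k
        proof -
          have "(\<integral>\<^sup>+ys. G j g ((r,k)#ys) * ppe i ((r,k)#ys) \<partial>count_space {ys. length ys = n})
            = (\<integral>\<^sup>+ys. ennreal (q i r k) * (G j (\<lambda>t. g (\<lambda>u. k u + t u)) ys * ppe r ys) \<partial>count_space {ys. length ys = n})"
            using False rj by (intro nn_integral_cong) (auto simp: G_cons mult_ac)
          also have "\<dots> = ennreal (q i r k) * Phi j r n (\<lambda>t. g (\<lambda>u. k u + t u))"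
            unfolding Phi_def by (rule nn_integral_cmult) simp
          finally show ?thesis .
        qed
        then show ?thesis using rj by (simp add: Q_def)
      qed
    qed
    also have "\<dots> = (\<Sum>r\<in>{1..s}-{j}. (if r = j then 0 else Q i r (\<lambda>k. Phi j r n (\<lambda>t. g (\<lambda>u. k u + t u)))))"
      by (intro nn_integral_count_space') (auto simp: Q_outside[OF i])
    finally show ?thesis using False by simp
  qed
qed

lemma Phi_add: "Phi j i n (\<lambda>t. a t + b t) = Phi j i n a + Phi j i n b"
  unfolding Phi_def by (subst nn_integral_add[symmetric]) (auto intro!: nn_integral_cong simp: G_def distrib_right)

lemma Phi_cmult: "Phi j i n (\<lambda>t. c * a t) = c * Phi j i n a"
  unfolding Phi_def by (subst nn_integral_cmult[symmetric]) (auto intro!: nn_integral_cong simp: G_def mult_ac)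

lemma Q_add: "Q i r (\<lambda>t. a t + b t) = Q i r a + Q i r b"
  unfolding Q_def by (subst nn_integral_add[symmetric]) (auto intro!: nn_integral_cong simp: distrib_left)

lemma Q_cmult: "Q i r (\<lambda>t. a t * c) = Q i r a * c"
  unfolding Q_def by (subst nn_integral_multc[symmetric]) (auto intro!: nn_integral_cong simp: mult_ac)

lemma Q_mono: "(\<And>t. a t \<le> b t) \<Longrightarrow> Q i r a \<le> Q i r b"
  unfolding Q_def by (intro nn_integral_mono mult_left_mono) auto

end

context mrc begin

definition E :: "nat \<Rightarrow> nat \<Rightarrow> 'w set" where
  "E j n = {\<omega>. 1 \<le> n \<and> J n \<omega> = j \<and> (\<forall>l. 1 \<le> l \<longrightarrow> l < n \<longrightarrow> J l \<omega> \<noteq> j)}"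

lemma sumk_hist: "sumk (hist n \<omega>) = S n \<omega>"
  unfolding sumk_def hist_def fun_eq_iff
  by (simp add: S_sum interv_sum_list_conv_sum_set_nat atLeast0LessThan comp_def)

lemma retf_hist: "retf j (hist n \<omega>) \<longleftrightarrow> \<omega> \<in> E j n"
proof (cases n)
  case 0 then show ?thesis by (simp add: retf_def E_def hist_def)
next
  case (Suc m)
  have "(\<forall>x\<in>set (hist m \<omega>). fst x \<noteq> j) \<longleftrightarrow> (\<forall>l. 1 \<le> l \<longrightarrow> l < Suc m \<longrightarrow> J l \<omega> \<noteq> j)"
  proof
    assume a: "\<forall>x\<in>set (hist m \<omega>). fst x \<noteq> j"
    show "\<forall>l. 1 \<le> l \<longrightarrow> l < Suc m \<longrightarrow> J l \<omega> \<noteq> j"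
    proof (intro allI impI)
      fix l assume "1 \<le> l" "l < Suc m"
      then obtain l' where "l = Suc l'" "l' < m" by (cases l) auto
      then show "J l \<omega> \<noteq> j" using a by (auto simp: hist_def)
    qed
  next
    assume a: "\<forall>l. 1 \<le> l \<longrightarrow> l < Suc m \<longrightarrow> J l \<omega> \<noteq> j"
    then show "\<forall>x\<in>set (hist m \<omega>). fst x \<noteq> j" by (auto simp: hist_def)
  qed
  then show ?thesis using Suc by (simp add: retf_def E_def hist_Suc)
qed

lemma G_hist: "G j g (hist n \<omega>) = g (S n \<omega>) * indicator (E j n) \<omega>"
  by (simp add: G_def retf_hist sumk_hist split: split_indicator)

lemma Phi_M:
  assumes i: "i \<in> {1..s}"
  shows "Phi j i n g = (\<integral>\<^sup>+\<omega>. g (S n \<omega>) * indicator (E j n) \<omega> \<partial>M i)"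
  unfolding Phi_def lemmaB[OF i, symmetric] G_hist ..

definition ret :: "nat \<Rightarrow> 'w set" where
  "ret j = {\<omega>. \<exists>l\<ge>1. J l \<omega> = j}"

lemma E_iff: "\<omega> \<in> E j n \<longleftrightarrow> \<omega> \<in> ret j \<and> n = firstret J j \<omega>"
proof
  assume a: "\<omega> \<in> E j n"
  then have r: "\<omega> \<in> ret j" by (auto simp: E_def ret_def)
  have "firstret J j \<omega> = n" unfolding firstret_def
    by (rule Least_equality) (use a in \<open>auto simp: E_def not_less[symmetric]\<close>)
  then show "\<omega> \<in> ret j \<and> n = firstret J j \<omega>" using r by simp
next
  assume a: "\<omega> \<in> ret j \<and> n = firstret J j \<omega>"
  then have ex: "\<exists>l. l \<ge> 1 \<and> J l \<omega> = j" by (auto simp: ret_def)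
  have 1: "firstret J j \<omega> \<ge> 1 \<and> J (firstret J j \<omega>) \<omega> = j"
    unfolding firstret_def by (rule LeastI_ex[OF ex])
  have 2: "J l \<omega> \<noteq> j" if "1 \<le> l" "l < firstret J j \<omega>" for l
    using not_less_Least[of l "\<lambda>l. l \<ge> 1 \<and> J l \<omega> = j"] that unfolding firstret_def by auto
  show "\<omega> \<in> E j n" using a 1 2 by (auto simp: E_def)
qed

definition xsum :: "nat \<Rightarrow> nat \<Rightarrow> (('d \<Rightarrow> nat) \<Rightarrow> ennreal) \<Rightarrow> ennreal" where
  "xsum j i g = (\<Sum>n. Phi j i n g)"

definition ysum :: "nat \<Rightarrow> nat \<Rightarrow> nat \<Rightarrow> (('d \<Rightarrow> nat) \<Rightarrow> ennreal) \<Rightarrow> ennreal" where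
  "ysum j N i g = (\<Sum>n<N. Phi j i n g)"

lemma link:
  assumes i: "i \<in> {1..s}"
  shows "(\<integral>\<^sup>+\<omega>. g (Tret J S j \<omega>) * indicator (ret j) \<omega> \<partial>M i) = xsum j i g"
proof -
  have mJ[measurable]: "J n \<in> measurable (M i) (count_space UNIV)" for n using measJ[OF i] .
  have mS: "(\<lambda>\<omega>. g (S n \<omega>)) \<in> borel_measurable (M i)" for n
    using measurable_compose[OF measS[OF i], of g borel] by simp
  have mE: "E j n \<inter> space (M i) \<in> sets (M i)" for n
  proof -
    have "E j n \<inter> space (M i) = {\<omega> \<in> space (M i). 1 \<le> n \<and> J n \<omega> = j \<and> (\<forall>l\<in>{1..<n}. J l \<omega> \<noteq> j)}"
      by (auto simp: E_def)
    also have "\<dots> \<in> sets (M i)" by measurable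
    finally show ?thesis .
  qed
  have pt: "g (Tret J S j \<omega>) * indicator (ret j) \<omega> = (\<Sum>n. g (S n \<omega>) * indicator (E j n) \<omega>)" for \<omega>
  proof (cases "\<omega> \<in> ret j")
    case True
    have "(\<lambda>n. g (S n \<omega>) * indicator (E j n) \<omega>) = (\<lambda>n. if n = firstret J j \<omega> then g (S n \<omega>) else 0)"
      using True by (auto simp: E_iff fun_eq_iff split: split_indicator)
    then have "(\<lambda>n. g (S n \<omega>) * indicator (E j n) \<omega>) sums g (S (firstret J j \<omega>) \<omega>)"
      using sums_single[of "firstret J j \<omega>" "\<lambda>n. g (S n \<omega>)"] by simp
    then show ?thesis using True by (simp add: sums_iff Tret_def)
  next
    case False
    then show ?thesis by (simp add: E_iff)
  qed
  have "(\<integral>\<^sup>+\<omega>. g (Tret J S j \<omega>) * indicator (ret j) \<omega> \<partial>M i) = (\<integral>\<^sup>+\<omega>. (\<Sum>n. g (S n \<omega>) * indicator (E j n) \<omega>) \<partial>M i)"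
    by (simp add: pt)
  also have "\<dots> = (\<Sum>n. \<integral>\<^sup>+\<omega>. g (S n \<omega>) * indicator (E j n) \<omega> \<partial>M i)"
  proof (rule nn_integral_suminf)
    fix n
    have "(\<lambda>\<omega>. g (S n \<omega>) * indicator (E j n \<inter> space (M i)) \<omega>) \<in> borel_measurable (M i)"
      using mS mE by measurable
    moreover have "(\<lambda>\<omega>. g (S n \<omega>) * indicator (E j n \<inter> space (M i)) \<omega>) \<in> borel_measurable (M i) \<longleftrightarrow>
      (\<lambda>\<omega>. g (S n \<omega>) * indicator (E j n) \<omega>) \<in> borel_measurable (M i)"
      by (intro measurable_cong) (auto split: split_indicator)
    ultimately show "(\<lambda>\<omega>. g (S n \<omega>) * indicator (E j n) \<omega>) \<in> borel_measurable (M i)" by simp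
  qed
  also have "\<dots> = xsum j i g" unfolding xsum_def Phi_M[OF i] ..
  finally show ?thesis .
qed

lemma ret_sets: "i \<in> {1..s} \<Longrightarrow> ret j \<inter> space (M i) \<in> sets (M i)"
proof -
  assume i: "i \<in> {1..s}"
  have mJ[measurable]: "J n \<in> measurable (M i) (count_space UNIV)" for n using measJ[OF i] .
  have "ret j \<inter> space (M i) = {\<omega> \<in> space (M i). \<exists>l\<in>{1..}. J l \<omega> = j}" by (auto simp: ret_def)
  also have "\<dots> \<in> sets (M i)" by measurable
  finally show ?thesis .
qed

lemma link_h:
  assumes i: "i \<in> {1..s}"
  shows "xsum j i (\<lambda>_. 1) = emeasure (M i) (ret j \<inter> space (M i))"
proof -
  have "xsum j i (\<lambda>_. 1) = (\<integral>\<^sup>+\<omega>. indicator (ret j) \<omega> \<partial>M i)" using link[OF i, of "\<lambda>_. 1" j] by simp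
  also have "\<dots> = (\<integral>\<^sup>+\<omega>. indicator (ret j \<inter> space (M i)) \<omega> \<partial>M i)"
    by (intro nn_integral_cong) (auto split: split_indicator)
  also have "\<dots> = emeasure (M i) (ret j \<inter> space (M i))" using ret_sets[OF i] by simp
  finally show ?thesis .
qed

lemma link_AE:
  assumes i: "i \<in> {1..s}" and ae: "AE \<omega> in M i. \<omega> \<in> ret j"
  shows "(\<integral>\<^sup>+\<omega>. g (Tret J S j \<omega>) \<partial>M i) = xsum j i g"
proof -
  have "(\<integral>\<^sup>+\<omega>. g (Tret J S j \<omega>) \<partial>M i) = (\<integral>\<^sup>+\<omega>. g (Tret J S j \<omega>) * indicator (ret j) \<omega> \<partial>M i)"
    using ae by (intro nn_integral_cong_AE) auto
  then show ?thesis using link[OF i] by simp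
qed

lemma xsum_rec:
  assumes i: "i \<in> {1..s}"
  shows "xsum j i g = Q i j g + (\<Sum>r\<in>{1..s}-{j}. Q i r (\<lambda>k. xsum j r (\<lambda>t. g (\<lambda>u. k u + t u))))"
proof -
  have "(\<lambda>n. Phi j i (Suc n) g) sums (\<Sum>n. Phi j i (Suc n) g)" by (rule summable_sums[OF summableI])
  then have "(\<lambda>n. Phi j i n g) sums (\<Sum>n. Phi j i (Suc n) g)" using sums_Suc by fastforce
  then have "xsum j i g = (\<Sum>n. Phi j i (Suc n) g)" by (simp add: xsum_def sums_iff)
  also have "\<dots> = (\<Sum>n. (if n = 0 then Q i j g else 0) +
     (\<Sum>r\<in>{1..s}-{j}. Q i r (\<lambda>k. Phi j r n (\<lambda>t. g (\<lambda>u. k u + t u)))))"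
    by (simp add: Phi_rec[OF i])
  also have "\<dots> = (\<Sum>n. (if n = 0 then Q i j g else 0)) +
     (\<Sum>n. \<Sum>r\<in>{1..s}-{j}. Q i r (\<lambda>k. Phi j r n (\<lambda>t. g (\<lambda>u. k u + t u))))"
    by (rule suminf_add[symmetric]) auto
  also have "(\<Sum>n. (if n = 0 then Q i j g else 0)) = Q i j g"
    using sums_single[of 0 "\<lambda>_. Q i j g"] by (simp add: sums_iff)
  also have "(\<Sum>n. \<Sum>r\<in>{1..s}-{j}. Q i r (\<lambda>k. Phi j r n (\<lambda>t. g (\<lambda>u. k u + t u))))
     = (\<Sum>r\<in>{1..s}-{j}. \<Sum>n. Q i r (\<lambda>k. Phi j r n (\<lambda>t. g (\<lambda>u. k u + t u))))"
    by (rule suminf_sum) auto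
  also have "\<dots> = (\<Sum>r\<in>{1..s}-{j}. Q i r (\<lambda>k. xsum j r (\<lambda>t. g (\<lambda>u. k u + t u))))"
  proof (intro sum.cong refl)
    fix r
    show "(\<Sum>n. Q i r (\<lambda>k. Phi j r n (\<lambda>t. g (\<lambda>u. k u + t u)))) = Q i r (\<lambda>k. xsum j r (\<lambda>t. g (\<lambda>u. k u + t u)))"
      unfolding Q_def xsum_def ennreal_suminf_cmult[symmetric]
      by (rule nn_integral_suminf[symmetric]) simp
  qed
  finally show ?thesis .
qed

lemma ysum_rec:
  assumes i: "i \<in> {1..s}"
  shows "ysum j (Suc N) i g = (if N = 0 then 0 else Q i j g) + (\<Sum>r\<in>{1..s}-{j}. Q i r (\<lambda>k. ysum j N r (\<lambda>t. g (\<lambda>u. k u + t u))))"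
proof -
  have "ysum j (Suc N) i g = (\<Sum>n<N. Phi j i (Suc n) g)"
    unfolding ysum_def sum.lessThan_Suc_shift by simp
  also have "\<dots> = (\<Sum>n<N. (if n = 0 then Q i j g else 0)) +
     (\<Sum>n<N. \<Sum>r\<in>{1..s}-{j}. Q i r (\<lambda>k. Phi j r n (\<lambda>t. g (\<lambda>u. k u + t u))))"
    by (simp add: Phi_rec[OF i] sum.distrib)
  also have "(\<Sum>n<N. (if n = 0 then Q i j g else 0)) = (if N = 0 then 0 else Q i j g)"
    by (simp add: sum.delta')
  also have "(\<Sum>n<N. \<Sum>r\<in>{1..s}-{j}. Q i r (\<lambda>k. Phi j r n (\<lambda>t. g (\<lambda>u. k u + t u))))
     = (\<Sum>r\<in>{1..s}-{j}. Q i r (\<lambda>k. ysum j N r (\<lambda>t. g (\<lambda>u. k u + t u))))"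
    unfolding ysum_def Q_def
    apply (subst sum.swap)
    apply (intro sum.cong refl)
    apply (subst nn_integral_sum[symmetric])
    by (auto simp: sum_distrib_left)
  finally show ?thesis .
qed

lemma xsum_SUP: "xsum j i g = (SUP N. ysum j N i g)"
  unfolding xsum_def ysum_def by (rule suminf_eq_SUP)

lemma ysum_le: "ysum j N i g \<le> xsum j i g"
  unfolding xsum_SUP by (rule SUP_upper) simp

lemma ysum_mono: "ysum j N i g \<le> ysum j (Suc N) i g"
  unfolding ysum_def by simp

lemma xsum_add: "xsum j i (\<lambda>t. a t + b t) = xsum j i a + xsum j i b"
  unfolding xsum_def Phi_add by (rule suminf_add[symmetric]) auto

lemma xsum_cmult: "xsum j i (\<lambda>t. c * a t) = c * xsum j i a"
  unfolding xsum_def Phi_cmult by simp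

lemma ysum_add: "ysum j N i (\<lambda>t. a t + b t) = ysum j N i a + ysum j N i b"
  unfolding ysum_def Phi_add by (simp add: sum.distrib)

lemma ysum_cmult: "ysum j N i (\<lambda>t. c * a t) = c * ysum j N i a"
  unfolding ysum_def Phi_cmult by (simp add: sum_distrib_left)

end

locale kac =
  fixes s :: nat and P :: "nat \<Rightarrow> nat \<Rightarrow> real" and \<nu> :: "nat \<Rightarrow> real" and j :: nat
  assumes Pnn: "\<And>a b. a \<in> {1..s} \<Longrightarrow> b \<in> {1..s} \<Longrightarrow> P a b \<ge> 0"
    and irr: "\<forall>a\<in>{1..s}. \<forall>b\<in>{1..s}. (a, b) \<in> {(a, b). a \<in> {1..s} \<and> b \<in> {1..s} \<and> P a b > 0}\<^sup>*"
    and stat: "\<forall>b\<in>{1..s}. \<nu> b = (\<Sum>a=1..s. \<nu> a * P a b)"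
    and nunn: "\<forall>a\<in>{1..s}. \<nu> a \<ge> 0"
    and nusum: "(\<Sum>a=1..s. \<nu> a) = 1"
    and j: "j \<in> {1..s}"
begin

abbreviation "Rel \<equiv> {(a, b). a \<in> {1..s} \<and> b \<in> {1..s} \<and> P a b > 0}"

lemma nu_pos: assumes b: "b \<in> {1..s}" shows "\<nu> b > 0"
proof (rule ccontr)
  assume "\<not> \<nu> b > 0"
  then have b0: "\<nu> b = 0" using nunn b by force
  have "\<nu> a = 0" if "(a, b) \<in> Rel\<^sup>*" for a
    using that
  proof (induction rule: converse_rtrancl_induct)
    case base then show ?case by (rule b0)
  next
    case (step a c)
    then have a: "a \<in> {1..s}" and c: "c \<in> {1..s}" and pac: "P a c > 0" by auto
    have "\<nu> a * P a c \<le> (\<Sum>a=1..s. \<nu> a * P a c)"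
      using a c by (intro member_le_sum) (auto intro!: mult_nonneg_nonneg nunn[rule_format] Pnn)
    also have "\<dots> = \<nu> c" using stat c by simp
    finally have "\<nu> a * P a c \<le> 0" using step.IH by simp
    moreover have "\<nu> a \<ge> 0" using nunn a by simp
    ultimately show ?case using pac by (simp add: mult_le_0_iff)
  qed
  then have "\<forall>a\<in>{1..s}. \<nu> a = 0" using irr b by blast
  then have "(\<Sum>a=1..s. \<nu> a) = 0" by simp
  then show False using nusum by simp
qed

lemma propagate:
  assumes base: "Pr j"
    and step: "\<And>a b. a \<in> {1..s} \<Longrightarrow> Pr a \<Longrightarrow> b \<in> {1..s} - {j} \<Longrightarrow> P a b > 0 \<Longrightarrow> Pr b"
    and b: "b \<in> {1..s}"
  shows "Pr b"
proof -
  have "(j, b) \<in> Rel\<^sup>*" using irr j b by blast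
  then show ?thesis
  proof (induction rule: rtrancl_induct)
    case base then show ?case by (rule assms(1))
  next
    case (step a c)
    then show ?case using assms(2)[of a c] base by (cases "c = j") auto
  qed
qed

abbreviation "R' \<equiv> {1..s} - {j}"

lemma swap_sum:
  "(\<Sum>i=1..s. ennreal (\<nu> i) * (\<Sum>r\<in>R'. ennreal (P i r) * z r)) = (\<Sum>r\<in>R'. ennreal (\<nu> r) * z r)"
proof -
  have "(\<Sum>i=1..s. ennreal (\<nu> i) * (\<Sum>r\<in>R'. ennreal (P i r) * z r))
      = (\<Sum>r\<in>R'. (\<Sum>i=1..s. ennreal (\<nu> i * P i r)) * z r)"
  proof -
    have "(\<Sum>i=1..s. ennreal (\<nu> i) * (\<Sum>r\<in>R'. ennreal (P i r) * z r))
       = (\<Sum>i=1..s. \<Sum>r\<in>R'. ennreal (\<nu> i) * (ennreal (P i r) * z r))"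
      by (simp add: sum_distrib_left)
    also have "\<dots> = (\<Sum>r\<in>R'. \<Sum>i=1..s. ennreal (\<nu> i) * (ennreal (P i r) * z r))"
      by (rule sum.swap)
    also have "\<dots> = (\<Sum>r\<in>R'. (\<Sum>i=1..s. ennreal (\<nu> i * P i r)) * z r)"
      unfolding sum_distrib_right
      by (intro sum.cong refl) (simp add: ennreal_mult nunn Pnn mult.assoc)
    finally show ?thesis .
  qed
  also have "\<dots> = (\<Sum>r\<in>R'. ennreal (\<nu> r) * z r)"
  proof (intro sum.cong refl)
    fix r assume r: "r \<in> R'"
    have "(\<Sum>i=1..s. ennreal (\<nu> i * P i r)) = ennreal (\<Sum>i=1..s. \<nu> i * P i r)"
      using r by (intro sum_ennreal) (auto intro!: mult_nonneg_nonneg nunn[rule_format] Pnn)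
    also have "\<dots> = ennreal (\<nu> r)" using stat r by simp
    finally show "(\<Sum>i=1..s. ennreal (\<nu> i * P i r)) * z r = ennreal (\<nu> r) * z r" by simp
  qed
  finally show ?thesis .
qed

lemma split_j: "(\<Sum>i=1..s. f i) = f j + (\<Sum>i\<in>R'. f i)"
  using j by (simp add: sum.remove)

lemma kac_core:
  fixes x c :: "nat \<Rightarrow> ennreal"
  assumes H1: "\<And>i. i \<in> {1..s} \<Longrightarrow> x i = c i + (\<Sum>r\<in>R'. ennreal (P i r) * x r)"
    and fin: "(\<Sum>i=1..s. ennreal (\<nu> i) * c i) < \<top> \<Longrightarrow> x j < \<top>"
  shows "ennreal (\<nu> j) * x j = (\<Sum>i=1..s. ennreal (\<nu> i) * c i)"
proof -
  define C where "C = (\<Sum>i=1..s. ennreal (\<nu> i) * c i)"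
  define X where "X = (\<Sum>r\<in>R'. ennreal (\<nu> r) * x r)"
  have "(\<Sum>i=1..s. ennreal (\<nu> i) * x i) = (\<Sum>i=1..s. ennreal (\<nu> i) * c i + ennreal (\<nu> i) * (\<Sum>r\<in>R'. ennreal (P i r) * x r))"
    by (intro sum.cong refl) (simp add: H1 distrib_left)
  also have "\<dots> = C + X" unfolding C_def X_def sum.distrib swap_sum ..
  finally have e1: "ennreal (\<nu> j) * x j + X = C + X" unfolding X_def split_j[of "\<lambda>i. ennreal (\<nu> i) * x i"] .
  show ?thesis
  proof (cases "x j < \<top>")
    case True
    have xfin: "x b < \<top>" if "b \<in> {1..s}" for b
    proof (rule propagate[where Pr="\<lambda>b. x b < \<top>", OF True _ that])
      fix a b assume a: "a \<in> {1..s}" and xa: "x a < \<top>" and b: "b \<in> R'" and p: "P a b > 0"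
      have "ennreal (P a b) * x b \<le> (\<Sum>r\<in>R'. ennreal (P a r) * x r)"
        using b by (intro member_le_sum) auto
      also have "\<dots> \<le> x a" using H1[OF a] by simp
      finally have "ennreal (P a b) * x b < \<top>" using xa by (simp add: le_less_trans)
      then show "x b < \<top>" using p by (auto simp: ennreal_mult_less_top)
    qed
    have "X < \<top>" unfolding X_def
      by (use xfin in \<open>auto simp: ennreal_mult_less_top\<close>)
    have e2: "X + ennreal (\<nu> j) * x j = X + C" using e1 by (simp only: add.commute)
    have "X \<noteq> \<top>" using \<open>X < \<top>\<close> by simp
    then show ?thesis using ennreal_add_left_cancel[of X "ennreal (\<nu> j) * x j" C] e2 unfolding C_def by (simp add: infinity_ennreal_def)
  next
    case False
    then have "\<not> C < \<top>" using fin unfolding C_def by blast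
    then have "C = \<top>" using top.not_eq_extremum by blast
    moreover have "x j = \<top>" using False top.not_eq_extremum by blast
    moreover have "\<nu> j > 0" using nu_pos j by simp
    ultimately have "ennreal (\<nu> j) * x j = \<top>" "C = \<top>" by (simp_all add: ennreal_mult_top)
    then show ?thesis by (metis C_def)
  qed
qed

lemma trunc_fin:
  fixes y :: "nat \<Rightarrow> nat \<Rightarrow> ennreal" and c :: "nat \<Rightarrow> ennreal"
  assumes y0: "\<And>i. y 0 i = 0"
    and ystep: "\<And>N i. i \<in> {1..s} \<Longrightarrow> y (Suc N) i \<le> c i + (\<Sum>r\<in>R'. ennreal (P i r) * y N r)"
    and ymono: "\<And>N i. y N i \<le> y (Suc N) i"
    and C: "(\<Sum>i=1..s. ennreal (\<nu> i) * c i) < \<top>"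
  shows "(SUP N. y N j) < \<top>"
proof -
  define C where "C = (\<Sum>i=1..s. ennreal (\<nu> i) * c i)"
  have cfin: "c i < \<top>" if i: "i \<in> {1..s}" for i
  proof -
    have "ennreal (\<nu> i) * c i \<le> C" unfolding C_def using i by (intro member_le_sum) auto
    then have "ennreal (\<nu> i) * c i < \<top>" using C unfolding C_def by (simp add: le_less_trans)
    then show ?thesis using nu_pos[OF i] by (auto simp: ennreal_mult_less_top)
  qed
  have yfin: "\<forall>i\<in>{1..s}. y N i < \<top>" for N
  proof (induction N)
    case 0 then show ?case by (simp add: y0)
  next
    case (Suc N)
    show ?case
    proof
      fix i assume i: "i \<in> {1..s}"
      have "c i + (\<Sum>r\<in>R'. ennreal (P i r) * y N r) < \<top>"
        using Suc cfin[OF i] by (auto simp: ennreal_mult_less_top)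
      then show "y (Suc N) i < \<top>" using ystep[OF i, of N] by (simp add: le_less_trans)
    qed
  qed
  have bound: "ennreal (\<nu> j) * y N j \<le> C" for N
  proof (cases N)
    case 0 then show ?thesis by (simp add: y0)
  next
    case (Suc M)
    define Y where "Y = (\<Sum>r\<in>R'. ennreal (\<nu> r) * y (Suc M) r)"
    have "ennreal (\<nu> j) * y (Suc M) j + Y = (\<Sum>i=1..s. ennreal (\<nu> i) * y (Suc M) i)"
      unfolding Y_def split_j[of "\<lambda>i. ennreal (\<nu> i) * y (Suc M) i"] ..
    also have "\<dots> \<le> (\<Sum>i=1..s. ennreal (\<nu> i) * c i + ennreal (\<nu> i) * (\<Sum>r\<in>R'. ennreal (P i r) * y M r))"
    proof (intro sum_mono)
      fix i assume i: "i \<in> {1..s}"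
      have "ennreal (\<nu> i) * y (Suc M) i \<le> ennreal (\<nu> i) * (c i + (\<Sum>r\<in>R'. ennreal (P i r) * y M r))"
        by (rule mult_left_mono[OF ystep[OF i]]) simp
      then show "ennreal (\<nu> i) * y (Suc M) i \<le> ennreal (\<nu> i) * c i + ennreal (\<nu> i) * (\<Sum>r\<in>R'. ennreal (P i r) * y M r)"
        by (simp only: distrib_left)
    qed
    also have "\<dots> = C + (\<Sum>r\<in>R'. ennreal (\<nu> r) * y M r)" unfolding C_def sum.distrib swap_sum ..
    also have "\<dots> \<le> C + Y" unfolding Y_def
      by (intro add_left_mono sum_mono mult_left_mono ymono) auto
    finally have "ennreal (\<nu> j) * y (Suc M) j + Y \<le> C + Y" .
    moreover have "Y < \<top>" unfolding Y_def
      using yfin by (auto simp: ennreal_mult_less_top)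
    ultimately have "Y + ennreal (\<nu> j) * y (Suc M) j \<le> Y + C" "Y \<noteq> \<top>" by (simp_all only: add.commute)
    then show ?thesis using Suc ennreal_add_left_cancel_le[of Y "ennreal (\<nu> j) * y (Suc M) j" C] by (simp add: infinity_ennreal_def)
  qed
  have "ennreal (\<nu> j) * (SUP N. y N j) = (SUP N. ennreal (\<nu> j) * y N j)"
    by (rule SUP_mult_left_ennreal)
  also have "\<dots> \<le> C" by (intro SUP_least bound)
  finally have "ennreal (\<nu> j) * (SUP N. y N j) < \<top>" using C unfolding C_def by (simp add: le_less_trans)
  then show ?thesis using nu_pos[OF j] by (auto simp: ennreal_mult_less_top)
qed

end

context mrc begin

lemma Qsum1:
  assumes i: "i \<in> {1..s}"
  shows "(\<Sum>r=1..s. Q i r (\<lambda>_. 1)) = 1"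
proof -
  interpret prob_space "M i" using prob[OF i] .
  have "1 = (\<integral>\<^sup>+\<omega>. (\<lambda>_. 1) (hist 1 \<omega>) \<partial>M i)" by (simp add: emeasure_space_1)
  also have "\<dots> = (\<integral>\<^sup>+xs. 1 * ppe i xs \<partial>count_space {xs. length xs = Suc 0})"
    by (rule lemmaB[OF i])
  also have "\<dots> = (\<integral>\<^sup>+x. \<integral>\<^sup>+ys. 1 * ppe i (x#ys) \<partial>count_space {ys. length ys = 0} \<partial>count_space UNIV)"
    by (rule sum_L_Suc)
  also have "\<dots> = (\<integral>\<^sup>+x. ennreal (q i (fst x) (snd x)) \<partial>count_space UNIV)"
    unfolding L0 by (intro nn_integral_cong) (auto simp: nn_integral_count_space_finite)
  also have "\<dots> = (\<integral>\<^sup>+r. Q i r (\<lambda>_. 1) \<partial>count_space UNIV)"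
    unfolding sum_pair[of "\<lambda>x. ennreal (q i (fst x) (snd x))"] Q_def by simp
  also have "\<dots> = (\<Sum>r\<in>{1..s}. Q i r (\<lambda>_. 1))"
    by (intro nn_integral_count_space') (auto simp: Q_outside[OF i])
  finally show ?thesis by simp
qed

lemma Q1_ptrans:
  assumes i: "i \<in> {1..s}"
  shows "Q i r (\<lambda>_. 1) = ennreal (ptrans q i r)"
proof (cases "r \<in> {1..s}")
  case False
  then show ?thesis using Q_outside[OF i False] q_facts(2)[OF i False] by (simp add: ptrans_def)
next
  case True
  have Qfin: "Q i r (\<lambda>_. 1) < \<top>"
  proof -
    have "Q i r (\<lambda>_. 1) \<le> (\<Sum>r=1..s. Q i r (\<lambda>_. 1))" using True by (intro member_le_sum) auto
    then show ?thesis using Qsum1[OF i] by (simp add: le_less_trans)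
  qed
  have eq: "Q i r (\<lambda>_. 1) = (\<integral>\<^sup>+k. ennreal (q i r k) \<partial>count_space UNIV)" by (simp add: Q_def)
  have int: "integrable (count_space UNIV) (q i r)"
    by (rule integrableI_bounded) (use Qfin eq q_facts(1)[OF i] in auto)
  then have abs: "Infinite_Set_Sum.abs_summable_on (q i r) UNIV" by (simp add: abs_summable_on_def)
  have "(\<integral>\<^sup>+k. ennreal (q i r k) \<partial>count_space UNIV) = ennreal (infsetsum (q i r) UNIV)"
    using abs q_facts(1)[OF i] by (intro nn_integral_conv_infsetsum) auto
  also have "infsetsum (q i r) UNIV = infsum (q i r) UNIV" using abs by (rule infsetsum_infsum)
  finally show ?thesis using eq by (simp add: ptrans_def)
qed

lemma ptrans_nn: "i \<in> {1..s} \<Longrightarrow> ptrans q i r \<ge> 0"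
  unfolding ptrans_def using q_facts(1) by (intro infsum_nonneg) auto

lemma ptrans_sum: "i \<in> {1..s} \<Longrightarrow> (\<Sum>r=1..s. ptrans q i r) = 1"
proof -
  assume i: "i \<in> {1..s}"
  have "ennreal (\<Sum>r=1..s. ptrans q i r) = (\<Sum>r=1..s. ennreal (ptrans q i r))"
    using ptrans_nn[OF i] by simp
  also have "\<dots> = 1" using Qsum1[OF i] by (simp add: Q1_ptrans[OF i])
  finally show ?thesis by simp
qed

lemma Q_const: "i \<in> {1..s} \<Longrightarrow> Q i r (\<lambda>_. c) = ennreal (ptrans q i r) * c"
  using Q_cmult[of i r "\<lambda>_. 1" c] by (simp add: Q1_ptrans)

lemma Q_zero_ptrans:
  assumes i: "i \<in> {1..s}" and p: "ptrans q i r = 0"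
  shows "Q i r g = 0"
proof -
  have "(\<integral>\<^sup>+k. ennreal (q i r k) \<partial>count_space UNIV) = 0"
    using Q1_ptrans[OF i, of r] p by (simp add: Q_def)
  then have "ennreal (q i r k) = 0" for k
    using nn_integral_ge_point[of k UNIV "\<lambda>k. ennreal (q i r k)"] by simp
  then show ?thesis by (simp add: Q_def)
qed

lemma h_rec:
  assumes i: "i \<in> {1..s}"
  shows "xsum j i (\<lambda>_. 1) = ennreal (ptrans q i j) + (\<Sum>r\<in>{1..s}-{j}. ennreal (ptrans q i r) * xsum j r (\<lambda>_. 1))"
  using xsum_rec[OF i, of j "\<lambda>_. 1"] by (simp add: Q_const[OF i] Q1_ptrans[OF i])

lemma h_le: "i \<in> {1..s} \<Longrightarrow> xsum j i (\<lambda>_. 1) \<le> 1"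
proof -
  assume i: "i \<in> {1..s}"
  interpret prob_space "M i" using prob[OF i] .
  show ?thesis using link_h[OF i] emeasure_le_1 by simp
qed

lemma h_one_step:
  assumes a: "a \<in> {1..s}" and ha: "xsum j a (\<lambda>_. 1) = 1" and b: "b \<in> {1..s} - {j}"
    and p: "ptrans q a b > 0" and j: "j \<in> {1..s}"
  shows "xsum j b (\<lambda>_. 1) = 1"
proof -
  define hr where "hr r = enn2real (xsum j r (\<lambda>_. 1))" for r
  have hr: "xsum j r (\<lambda>_. 1) = ennreal (hr r)" "0 \<le> hr r" "hr r \<le> 1" if "r \<in> {1..s}" for r
  proof -
    have le: "xsum j r (\<lambda>_. 1) \<le> 1" using h_le[OF that] .
    then show "xsum j r (\<lambda>_. 1) = ennreal (hr r)" unfolding hr_def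
      using le by (metis ennreal_enn2real ennreal_one_less_top le_less_trans less_irrefl)
    show "0 \<le> hr r" unfolding hr_def by simp
    show "hr r \<le> 1" unfolding hr_def using le
      by (metis enn2real_1 enn2real_mono ennreal_one_less_top)
  qed
  let ?R = "{1..s} - {j}"
  have "ennreal 1 = ennreal (ptrans q a j) + (\<Sum>r\<in>?R. ennreal (ptrans q a r) * ennreal (hr r))"
    using h_rec[OF a, of j] ha hr(1) by simp
  also have "\<dots> = ennreal (ptrans q a j + (\<Sum>r\<in>?R. ptrans q a r * hr r))"
  proof -
    have "(\<Sum>r\<in>?R. ennreal (ptrans q a r) * ennreal (hr r)) = (\<Sum>r\<in>?R. ennreal (ptrans q a r * hr r))"
      using ptrans_nn[OF a] hr(2) by (intro sum.cong refl) (simp add: ennreal_mult)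
    also have "\<dots> = ennreal (\<Sum>r\<in>?R. ptrans q a r * hr r)"
      using ptrans_nn[OF a] hr(2) by (intro sum_ennreal) simp
    moreover have nn: "0 \<le> (\<Sum>r\<in>?R. ptrans q a r * hr r)"
      by (intro sum_nonneg mult_nonneg_nonneg) (auto simp: ptrans_nn[OF a] hr(2))
    ultimately show ?thesis
      using ennreal_plus[OF ptrans_nn[OF a] nn] by simp
  qed
  finally have e1: "ptrans q a j + (\<Sum>r\<in>?R. ptrans q a r * hr r) = 1"
    using ptrans_nn[OF a] hr(2) by (subst (asm) ennreal_inj) (auto intro!: add_nonneg_nonneg sum_nonneg)
  have e2: "ptrans q a j + (\<Sum>r\<in>?R. ptrans q a r) = 1"
    using ptrans_sum[OF a] j by (simp add: sum.remove)
  have "(\<Sum>r\<in>?R. ptrans q a r * (1 - hr r)) = 0"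
    using e1 e2 by (simp add: right_diff_distrib sum_subtractf)
  moreover have "\<forall>r\<in>?R. ptrans q a r * (1 - hr r) \<ge> 0"
    using ptrans_nn[OF a] hr(3) by auto
  ultimately have "ptrans q a b * (1 - hr b) = 0" using b sum_nonneg_eq_0_iff[of ?R "\<lambda>r. ptrans q a r * (1 - hr r)"] by blast
  then have "hr b = 1" using p by simp
  then show ?thesis using hr(1) b by simp
qed

end

lemma div_from: "0 < (a::real) \<Longrightarrow> ennreal a * x = c \<Longrightarrow> x = c / ennreal a"
  by (metis ennreal_eq_0_iff ennreal_mult_divide_eq ennreal_neq_top mult.commute not_le)

context mrc begin

lemma Q_m1: "m1 s q w i = (\<Sum>r=1..s. Q i r (\<lambda>k. of_nat (k w)))"
  unfolding m1_def Q_def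
  by (intro sum.cong refl nn_integral_cong) (simp add: ennreal_mult'' ennreal_of_nat_eq_real_of_nat)

lemma Q_m2: "m2 s q u v i = (\<Sum>r=1..s. Q i r (\<lambda>k. of_nat (k u) * of_nat (k v)))"
  unfolding m2_def Q_def
  by (intro sum.cong refl nn_integral_cong) (simp add: ennreal_mult'' ennreal_of_nat_eq_real_of_nat mult.assoc)

lemma pm1r:
  assumes i: "i \<in> {1..s}"
  shows "ennreal (ptrans q i r) * m1r q u i r = Q i r (\<lambda>k. of_nat (k u))"
proof -
  have m: "m1r q u i r = Q i r (\<lambda>k. of_nat (k u)) / ennreal (ptrans q i r)"
    unfolding m1r_def Q_def
    by (intro arg_cong2[where f="(/)"] refl nn_integral_cong) (simp add: ennreal_mult'' ennreal_of_nat_eq_real_of_nat)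
  show ?thesis
  proof (cases "ptrans q i r = 0")
    case True
    then show ?thesis using Q_zero_ptrans[OF i True] m by simp
  next
    case False
    then have "ptrans q i r > 0" using ptrans_nn[OF i, of r] by simp
    then show ?thesis unfolding m ennreal_times_divide
      by (metis div_from mult.commute)
  qed
qed

end

theorem proposition12:
  fixes s :: nat and q :: "nat \<Rightarrow> nat \<Rightarrow> ('d::finite \<Rightarrow> nat) \<Rightarrow> real"
    and M :: "nat \<Rightarrow> 'w measure" and J :: "nat \<Rightarrow> 'w \<Rightarrow> nat" and S :: "nat \<Rightarrow> 'w \<Rightarrow> ('d \<Rightarrow> nat)"
    and \<nu> :: "nat \<Rightarrow> real" and j :: nat and u v :: 'd
  assumes "mtmrc s q M J S"
    and "irreducible_mtmrc s q"
    and "ergodic_mtmrc s M J S"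
    and "stationary_dist s q \<nu>"
    and "j \<in> {1..s}"
  shows "mu1 M J S u j j = (\<Sum>i=1..s. ennreal (\<nu> i) * m1 s q u i) / ennreal (\<nu> j)
    \<and> (\<lambda>w. mu1 M J S w j j) = (\<lambda>w. (\<Sum>i=1..s. ennreal (\<nu> i) * m1 s q w i) / ennreal (\<nu> j))
    \<and> mu2 M J S u v j j =
        (\<Sum>i=1..s. ennreal (\<nu> i) * m2 s q u v i) / ennreal (\<nu> j)
      + (\<Sum>i=1..s. \<Sum>r\<in>{1..s} - {j}. ennreal (\<nu> i) * ennreal (ptrans q i r) *
            (m1r q u i r * mu1 M J S v r j + m1r q v i r * mu1 M J S u r j)) / ennreal (\<nu> j)"
proof -
  interpret mrc s q M J S by unfold_locales (rule assms(1))
  have j: "j \<in> {1..s}" by (rule assms(5))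
  interpret K: kac s "ptrans q" \<nu> j
  proof unfold_locales
    show "\<And>a b. a \<in> {1..s} \<Longrightarrow> b \<in> {1..s} \<Longrightarrow> 0 \<le> ptrans q a b" using ptrans_nn by blast
    show "\<forall>a\<in>{1..s}. \<forall>b\<in>{1..s}. (a, b) \<in> {(a, b). a \<in> {1..s} \<and> b \<in> {1..s} \<and> 0 < ptrans q a b}\<^sup>*"
      using assms(2) unfolding irreducible_mtmrc_def by blast
    show "\<forall>b\<in>{1..s}. \<nu> b = (\<Sum>a = 1..s. \<nu> a * ptrans q a b)" "\<forall>a\<in>{1..s}. 0 \<le> \<nu> a" "sum \<nu> {1..s} = 1"
      using assms(4) unfolding stationary_dist_def by blast+
  qed (rule j)
  let ?R = "{1..s} - {j}"
  have erg: "\<And>w. AE \<omega> in M j. \<exists>l\<ge>1. J l \<omega> = j" "\<And>w. (\<integral>\<^sup>+\<omega>. of_nat (Tret J S j \<omega> w) \<partial>M j) < \<infinity>"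
    using assms(3) j unfolding ergodic_mtmrc_def by blast+
  define h where "h r = xsum j r (\<lambda>_. 1)" for r
  have hj: "h j = 1"
  proof -
    interpret prob_space "M j" using prob[OF j] .
    have "AE \<omega> in M j. \<omega> \<in> ret j \<inter> space (M j)" using erg(1) by (auto simp: ret_def)
    then show ?thesis unfolding h_def link_h[OF j] using ret_sets[OF j] by (intro emeasure_eq_1_AE) auto
  qed
  have hall: "h b = 1" if b: "b \<in> {1..s}" for b
  proof (rule K.propagate[where Pr="\<lambda>b. h b = 1", OF hj _ b])
    fix a c assume "a \<in> {1..s}" "h a = 1" "c \<in> ?R" "ptrans q a c > 0"
    then show "h c = 1" unfolding h_def by (rule h_one_step[OF _ _ _ _ j])
  qed
  have AEret: "AE \<omega> in M b. \<omega> \<in> ret j" if b: "b \<in> {1..s}" for b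
  proof -
    interpret prob_space "M b" using prob[OF b] .
    have "emeasure (M b) (ret j \<inter> space (M b)) = 1" using hall[OF b] link_h[OF b] by (simp add: h_def)
    then have "prob (ret j \<inter> space (M b)) = 1" by (simp add: emeasure_eq_measure)
    then have "AE \<omega> in M b. \<omega> \<in> ret j \<inter> space (M b)" by (rule AE_prob_1)
    then show ?thesis by auto
  qed
  define M1 where "M1 w r = xsum j r (\<lambda>t. of_nat (t w))" for w r
  have mu1_eq: "mu1 M J S w r j = M1 w r" if r: "r \<in> {1..s}" for w r
    unfolding mu1_def M1_def by (rule link_AE[OF r AEret[OF r]])
  have shift1: "xsum j r (\<lambda>t. of_nat (k w) + of_nat (t w)) = of_nat (k w) + M1 w r" if r: "r \<in> {1..s}" for r k w
  proof -
    have "(\<lambda>t. of_nat (k w) + of_nat (t w) :: ennreal) = (\<lambda>t. of_nat (k w) * 1 + of_nat (t w))" by simp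
    then show ?thesis
      using xsum_add[of j r "\<lambda>t. of_nat (k w) * 1" "\<lambda>t. of_nat (t w)"] xsum_cmult[of j r "of_nat (k w)" "\<lambda>_. 1"]
        hall[OF r] by (simp add: h_def M1_def)
  qed
  have M1_rec: "M1 w i = m1 s q w i + (\<Sum>r\<in>?R. ennreal (ptrans q i r) * M1 w r)" if i: "i \<in> {1..s}" for w i
  proof -
    have "M1 w i = Q i j (\<lambda>k. of_nat (k w)) + (\<Sum>r\<in>?R. Q i r (\<lambda>k. xsum j r (\<lambda>t. of_nat (k w) + of_nat (t w))))"
      unfolding M1_def using xsum_rec[OF i, of j "\<lambda>t. of_nat (t w)"] by simp
    also have "\<dots> = Q i j (\<lambda>k. of_nat (k w)) + (\<Sum>r\<in>?R. Q i r (\<lambda>k. of_nat (k w)) + ennreal (ptrans q i r) * M1 w r)"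
      by (intro arg_cong2[where f="(+)"] refl sum.cong) (auto simp: shift1 Q_add Q_const[OF i])
    also have "\<dots> = m1 s q w i + (\<Sum>r\<in>?R. ennreal (ptrans q i r) * M1 w r)"
      unfolding Q_m1 K.split_j[of "\<lambda>r. Q i r (\<lambda>k. of_nat (k w))"] sum.distrib by (simp add: add.assoc)
    finally show ?thesis .
  qed
  have eq1: "ennreal (\<nu> j) * M1 w j = (\<Sum>i=1..s. ennreal (\<nu> i) * m1 s q w i)" for w
  proof (rule K.kac_core)
    show "M1 w i = m1 s q w i + (\<Sum>r\<in>?R. ennreal (ptrans q i r) * M1 w r)" if "i \<in> {1..s}" for i
      using M1_rec[OF that] .
    show "M1 w j < \<top>" using erg(2)[of w] mu1_eq[OF j, of w] by (simp add: mu1_def)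
  qed
  have res1: "mu1 M J S w j j = (\<Sum>i=1..s. ennreal (\<nu> i) * m1 s q w i) / ennreal (\<nu> j)" for w
    using div_from[OF K.nu_pos[OF j] eq1[of w]] mu1_eq[OF j] by simp
  have hall': "xsum j r (\<lambda>_. 1) = 1" if r: "r \<in> {1..s}" for r using hall[OF r] by (simp add: h_def)
  have xsc: "xsum j r (\<lambda>t. c) = c" if r: "r \<in> {1..s}" for r c
    using xsum_cmult[of j r c "\<lambda>_. 1"] hall'[OF r] by simp
  define g2 where "g2 = (\<lambda>t::'d\<Rightarrow>nat. (of_nat (t u) * of_nat (t v) :: ennreal))"
  define M2 where "M2 r = xsum j r g2" for r
  define c2 where "c2 i = (\<Sum>r=1..s. Q i r g2) + (\<Sum>r\<in>?R. Q i r (\<lambda>k. of_nat (k u)) * M1 v r + Q i r (\<lambda>k. of_nat (k v)) * M1 u r)" for i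
  have shiftfun: "(\<lambda>t. g2 (\<lambda>w. k w + t w)) = (\<lambda>t. g2 k * 1 + (of_nat (k u) * of_nat (t v) + (of_nat (k v) * of_nat (t u) + g2 t)))" for k
    by (simp add: g2_def fun_eq_iff algebra_simps)
  have xs_shift: "xsum j r (\<lambda>t. g2 (\<lambda>w. k w + t w)) = g2 k + (of_nat (k u) * M1 v r + (of_nat (k v) * M1 u r + M2 r))"
    if r: "r \<in> {1..s}" for r k
    unfolding shiftfun by (simp only: xsum_add xsum_cmult hall'[OF r] M1_def M2_def mult_1_right xsc[OF r])
  have ys_shift: "ysum j N r (\<lambda>t. g2 (\<lambda>w. k w + t w)) = g2 k * ysum j N r (\<lambda>_. 1) + (of_nat (k u) * ysum j N r (\<lambda>t. of_nat (t v)) + (of_nat (k v) * ysum j N r (\<lambda>t. of_nat (t u)) + ysum j N r g2))"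
    for N r k
    unfolding shiftfun by (simp only: ysum_add ysum_cmult)
  have alg: "Q i j g2 + (\<Sum>r\<in>?R. Q i r (\<lambda>k. g2 k + (of_nat (k u) * M1 v r + (of_nat (k v) * M1 u r + z r))))
      = c2 i + (\<Sum>r\<in>?R. ennreal (ptrans q i r) * z r)" if i: "i \<in> {1..s}" for i z
  proof -
    have "(\<Sum>r\<in>?R. Q i r (\<lambda>k. g2 k + (of_nat (k u) * M1 v r + (of_nat (k v) * M1 u r + z r))))
       = (\<Sum>r\<in>?R. Q i r g2 + ((Q i r (\<lambda>k. of_nat (k u)) * M1 v r + Q i r (\<lambda>k. of_nat (k v)) * M1 u r) + ennreal (ptrans q i r) * z r))"
      by (intro sum.cong refl) (simp add: Q_add Q_cmult Q_const[OF i] add.assoc)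
    also have "\<dots> = (\<Sum>r\<in>?R. Q i r g2) + ((\<Sum>r\<in>?R. Q i r (\<lambda>k. of_nat (k u)) * M1 v r + Q i r (\<lambda>k. of_nat (k v)) * M1 u r) + (\<Sum>r\<in>?R. ennreal (ptrans q i r) * z r))"
      by (simp add: sum.distrib)
    finally show ?thesis unfolding c2_def K.split_j[of "\<lambda>r. Q i r g2"] by (simp add: add.assoc)
  qed
  have M2_rec: "M2 i = c2 i + (\<Sum>r\<in>?R. ennreal (ptrans q i r) * M2 r)" if i: "i \<in> {1..s}" for i
  proof -
    have "M2 i = Q i j g2 + (\<Sum>r\<in>?R. Q i r (\<lambda>k. xsum j r (\<lambda>t. g2 (\<lambda>w. k w + t w))))"
      unfolding M2_def by (rule xsum_rec[OF i])
    also have "\<dots> = Q i j g2 + (\<Sum>r\<in>?R. Q i r (\<lambda>k. g2 k + (of_nat (k u) * M1 v r + (of_nat (k v) * M1 u r + M2 r))))"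
      by (intro arg_cong2[where f="(+)"] refl sum.cong) (simp_all add: xs_shift)
    also have "\<dots> = c2 i + (\<Sum>r\<in>?R. ennreal (ptrans q i r) * M2 r)" by (rule alg[OF i])
    finally show ?thesis .
  qed
  have ystep: "ysum j (Suc N) i g2 \<le> c2 i + (\<Sum>r\<in>?R. ennreal (ptrans q i r) * ysum j N r g2)"
    if i: "i \<in> {1..s}" for N i
  proof -
    have "ysum j (Suc N) i g2 = (if N = 0 then 0 else Q i j g2) + (\<Sum>r\<in>?R. Q i r (\<lambda>k. ysum j N r (\<lambda>t. g2 (\<lambda>w. k w + t w))))"
      by (rule ysum_rec[OF i])
    also have "\<dots> \<le> Q i j g2 + (\<Sum>r\<in>?R. Q i r (\<lambda>k. g2 k + (of_nat (k u) * M1 v r + (of_nat (k v) * M1 u r + ysum j N r g2))))"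
    proof (intro add_mono sum_mono Q_mono)
      show "(if N = 0 then 0 else Q i j g2) \<le> Q i j g2" by simp
      fix r k assume r: "r \<in> ?R"
      then have r1: "r \<in> {1..s}" by simp
      have a: "ysum j N r (\<lambda>_. 1) \<le> 1" using ysum_le[of j N r "\<lambda>_. 1"] hall'[OF r1] by simp
      have b: "ysum j N r (\<lambda>t. of_nat (t v)) \<le> M1 v r" using ysum_le unfolding M1_def .
      have c: "ysum j N r (\<lambda>t. of_nat (t u)) \<le> M1 u r" using ysum_le unfolding M1_def .
      show "ysum j N r (\<lambda>t. g2 (\<lambda>w. k w + t w)) \<le> g2 k + (of_nat (k u) * M1 v r + (of_nat (k v) * M1 u r + ysum j N r g2))"
        unfolding ys_shift
        using mult_left_mono[OF a, of "g2 k"] mult_left_mono[OF b, of "of_nat (k u)"] mult_left_mono[OF c, of "of_nat (k v)"]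
        by (intro add_mono) auto
    qed
    also have "\<dots> = c2 i + (\<Sum>r\<in>?R. ennreal (ptrans q i r) * ysum j N r g2)" by (rule alg[OF i])
    finally show ?thesis .
  qed
  have eq2: "ennreal (\<nu> j) * M2 j = (\<Sum>i=1..s. ennreal (\<nu> i) * c2 i)"
  proof (rule K.kac_core)
    show "M2 i = c2 i + (\<Sum>r\<in>?R. ennreal (ptrans q i r) * M2 r)" if "i \<in> {1..s}" for i
      using M2_rec[OF that] .
    assume C: "(\<Sum>i=1..s. ennreal (\<nu> i) * c2 i) < \<top>"
    have "(SUP N. ysum j N j g2) < \<top>"
      by (rule K.trunc_fin[where c=c2 and y="\<lambda>N i. ysum j N i g2", OF _ ystep ysum_mono C]) (simp_all add: ysum_def)
    then show "M2 j < \<top>" unfolding M2_def xsum_SUP .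
  qed
  have mu2_eq: "mu2 M J S u v j j = M2 j"
    unfolding mu2_def M2_def using link_AE[OF j AEret[OF j], of g2] by (simp add: g2_def)
  have sumeq: "(\<Sum>i=1..s. ennreal (\<nu> i) * c2 i) = (\<Sum>i=1..s. ennreal (\<nu> i) * m2 s q u v i)
      + (\<Sum>i=1..s. \<Sum>r\<in>{1..s} - {j}. ennreal (\<nu> i) * ennreal (ptrans q i r) *
            (m1r q u i r * mu1 M J S v r j + m1r q v i r * mu1 M J S u r j))"
  proof -
    have "ennreal (\<nu> i) * c2 i = ennreal (\<nu> i) * m2 s q u v i + (\<Sum>r\<in>{1..s} - {j}. ennreal (\<nu> i) * ennreal (ptrans q i r) *
            (m1r q u i r * mu1 M J S v r j + m1r q v i r * mu1 M J S u r j))" if i: "i \<in> {1..s}" for i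
    proof -
      have "(\<Sum>r\<in>{1..s} - {j}. ennreal (\<nu> i) * ennreal (ptrans q i r) *
            (m1r q u i r * mu1 M J S v r j + m1r q v i r * mu1 M J S u r j))
         = (\<Sum>r\<in>{1..s} - {j}. ennreal (\<nu> i) * (Q i r (\<lambda>k. of_nat (k u)) * M1 v r + Q i r (\<lambda>k. of_nat (k v)) * M1 u r))"
      proof (intro sum.cong refl)
        fix r assume r: "r \<in> ?R"
        then have r1: "r \<in> {1..s}" by simp
        have "ennreal (\<nu> i) * ennreal (ptrans q i r) * (m1r q u i r * mu1 M J S v r j + m1r q v i r * mu1 M J S u r j)
          = ennreal (\<nu> i) * ((ennreal (ptrans q i r) * m1r q u i r) * mu1 M J S v r j + (ennreal (ptrans q i r) * m1r q v i r) * mu1 M J S u r j)"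
          by (simp add: algebra_simps)
        also have "\<dots> = ennreal (\<nu> i) * (Q i r (\<lambda>k. of_nat (k u)) * M1 v r + Q i r (\<lambda>k. of_nat (k v)) * M1 u r)"
          by (simp add: pm1r[OF i] mu1_eq[OF r1])
        finally show "ennreal (\<nu> i) * ennreal (ptrans q i r) * (m1r q u i r * mu1 M J S v r j + m1r q v i r * mu1 M J S u r j)
          = ennreal (\<nu> i) * (Q i r (\<lambda>k. of_nat (k u)) * M1 v r + Q i r (\<lambda>k. of_nat (k v)) * M1 u r)" .
      qed
      then show ?thesis unfolding c2_def Q_m2 g2_def by (simp add: distrib_left sum_distrib_left)
    qed
    then show ?thesis by (simp add: sum.distrib)
  qed
  have res2: "mu2 M J S u v j j =
        (\<Sum>i=1..s. ennreal (\<nu> i) * m2 s q u v i) / ennreal (\<nu> j)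
      + (\<Sum>i=1..s. \<Sum>r\<in>{1..s} - {j}. ennreal (\<nu> i) * ennreal (ptrans q i r) *
            (m1r q u i r * mu1 M J S v r j + m1r q v i r * mu1 M J S u r j)) / ennreal (\<nu> j)"
    unfolding mu2_eq div_from[OF K.nu_pos[OF j] eq2] sumeq add_divide_distrib_ennreal ..
  show ?thesis using res1 res2 by auto
qed


end
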